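(* Let $T=(V,E)$ be a tree on $n$ vertices, let $f=\{i,j\}$ be a pair of vertices with $d_{i,j}=d>1$, and let $B=E\cup\{f\}$. Then the eigenvalues of $\mathrm{Min4PC}_T[B,B]$ are $-2$ with multiplicity $n-3$, together with the three roots of the cubic polynomial $$g(x)=x^3-(2n-6)x^2-(nd^2-5d^2+2nd-2d+5n-9)x-2(d-1)^2(n-1).$$
   Context: $d_{i,j}$ is the distance in $T$ between vertices $i,j$; $\mathcal{V}_2$ is the set of 2-element subsets of $V$ (edges regarded as elements of $\mathcal{V}_2$). $\mathrm{Min4PC}_T$ is the $\binom n2\times\binom n2$ matrix indexed by $\mathcal{V}_2$ whose entry in row $\{i,j\}$, column $\{k,l\}$ is $\min\{d_{i,l}+d_{j,k},\ d_{i,k}+d_{j,l},\ d_{i,j}+d_{k,l}\}$. $M[B,B]$ denotes the principal submatrix with rows and columns indexed by $B$. *)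

theory Defs
  imports "Jordan_Normal_Form.Char_Poly"
begin

definition simple_graph :: "'a set \<Rightarrow> 'a set set \<Rightarrow> bool" where
  "simple_graph V E \<longleftrightarrow> finite V \<and> (\<forall>e\<in>E. \<exists>u v. u \<noteq> v \<and> u \<in> V \<and> v \<in> V \<and> e = {u, v})"

definition is_walk :: "'a set \<Rightarrow> 'a set set \<Rightarrow> 'a list \<Rightarrow> bool" where
  "is_walk V E vs \<longleftrightarrow> vs \<noteq> [] \<and> set vs \<subseteq> V \<and>
     (\<forall>k. Suc k < length vs \<longrightarrow> {vs ! k, vs ! Suc k} \<in> E)"

definition connected_graph :: "'a set \<Rightarrow> 'a set set \<Rightarrow> bool" where
  "connected_graph V E \<longleftrightarrow>
     (\<forall>u\<in>V. \<forall>v\<in>V. \<exists>vs. is_walk V E vs \<and> hd vs = u \<and> last vs = v)"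

definition acyclic_graph :: "'a set \<Rightarrow> 'a set set \<Rightarrow> bool" where
  "acyclic_graph V E \<longleftrightarrow>
     \<not> (\<exists>vs. length vs \<ge> 3 \<and> distinct vs \<and> is_walk V E vs \<and> {last vs, hd vs} \<in> E)"

definition is_tree :: "'a set \<Rightarrow> 'a set set \<Rightarrow> bool" where
  "is_tree V E \<longleftrightarrow> simple_graph V E \<and> V \<noteq> {} \<and> connected_graph V E \<and> acyclic_graph V E"

definition gdist :: "'a set \<Rightarrow> 'a set set \<Rightarrow> 'a \<Rightarrow> 'a \<Rightarrow> nat" where
  "gdist V E u v = (LEAST k. \<exists>vs. is_walk V E vs \<and> hd vs = u \<and> last vs = v \<and> length vs = Suc k)"

definition min4pc :: "'a set \<Rightarrow> 'a set set \<Rightarrow> 'a \<times> 'a \<Rightarrow> 'a \<times> 'a \<Rightarrow> real" where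
  "min4pc V E p q = (case p of (i, j) \<Rightarrow> case q of (k, l) \<Rightarrow>
      real (min (gdist V E i l + gdist V E j k)
           (min (gdist V E i k + gdist V E j l) (gdist V E i j + gdist V E k l))))"

text \<open>The principal submatrix Min4PC_T[B,B], rows/columns ordered by an enumeration ps of B
  (each element of B given as an ordered pair of its two vertices).\<close>
definition min4pc_sub :: "'a set \<Rightarrow> 'a set set \<Rightarrow> ('a \<times> 'a) list \<Rightarrow> real mat" where
  "min4pc_sub V E ps = mat (length ps) (length ps) (\<lambda>(r, c). min4pc V E (ps ! r) (ps ! c))"

definition enumerates :: "('a \<times> 'a) list \<Rightarrow> 'a set set \<Rightarrow> bool" where
  "enumerates ps B \<longleftrightarrow> distinct (map (\<lambda>(a, b). {a, b}) ps) \<and> set (map (\<lambda>(a, b). {a, b}) ps) = B"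

end

theory Submission
  imports Defs
begin

lemma sylvester_det:
  fixes U W :: "real mat" and t :: real
  assumes U: "U \<in> carrier_mat n k" and W: "W \<in> carrier_mat k n" and t: "t \<noteq> 0"
  shows "t ^ k * det (t \<cdot>\<^sub>m 1\<^sub>m n - U * W) = t ^ n * det (t \<cdot>\<^sub>m 1\<^sub>m k - W * U)"
proof -
  define Big where "Big = four_block_mat (t \<cdot>\<^sub>m 1\<^sub>m n) U W (1\<^sub>m k)"
  have UW: "U * W \<in> carrier_mat n n" using U W by auto
  have WU: "W * U \<in> carrier_mat k k" using U W by auto
  have C1: "t \<cdot>\<^sub>m 1\<^sub>m n - U * W \<in> carrier_mat n n" using UW by (intro minus_carrier_mat) auto
  have "four_block_mat (1\<^sub>m n) U (0\<^sub>m k n) (1\<^sub>m k) *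
       four_block_mat (t \<cdot>\<^sub>m 1\<^sub>m n - U * W) (0\<^sub>m n k) W (1\<^sub>m k)
     = four_block_mat (1\<^sub>m n * (t \<cdot>\<^sub>m 1\<^sub>m n - U * W) + U * W) (1\<^sub>m n * 0\<^sub>m n k + U * 1\<^sub>m k)
         (0\<^sub>m k n * (t \<cdot>\<^sub>m 1\<^sub>m n - U * W) + 1\<^sub>m k * W) (0\<^sub>m k n * 0\<^sub>m n k + 1\<^sub>m k * 1\<^sub>m k)"
    by (rule mult_four_block_mat, insert U W C1, auto)
  also have "\<dots> = Big" unfolding Big_def
    by (rule cong_four_block_mat; rule eq_matI, insert U W UW, auto)
  finally have Bd: "Big = four_block_mat (1\<^sub>m n) U (0\<^sub>m k n) (1\<^sub>m k) *
       four_block_mat (t \<cdot>\<^sub>m 1\<^sub>m n - U * W) (0\<^sub>m n k) W (1\<^sub>m k)" by simp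
  have e1: "det Big = det (t \<cdot>\<^sub>m 1\<^sub>m n - U * W)"
  proof -
    have "det Big = det (four_block_mat (1\<^sub>m n) U (0\<^sub>m k n) (1\<^sub>m k)) *
       det (four_block_mat (t \<cdot>\<^sub>m 1\<^sub>m n - U * W) (0\<^sub>m n k) W (1\<^sub>m k))"
      unfolding Bd by (rule det_mult[of _ "n+k"], insert U W C1, auto)
    also have "det (four_block_mat (1\<^sub>m n) U (0\<^sub>m k n) (1\<^sub>m k)) = 1"
      by (subst det_four_block_mat_lower_left_zero[of _ n _ k], insert U, auto)
    also have "det (four_block_mat (t \<cdot>\<^sub>m 1\<^sub>m n - U * W) (0\<^sub>m n k) W (1\<^sub>m k)) = det (t \<cdot>\<^sub>m 1\<^sub>m n - U * W)"
      by (subst det_four_block_mat_upper_right_zero[of _ n _ k], insert W C1, auto)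
    finally show ?thesis by simp
  qed
  define C4 where "C4 = 1\<^sub>m k - (1/t) \<cdot>\<^sub>m (W * U)"
  have C4: "C4 \<in> carrier_mat k k" unfolding C4_def using WU by (intro minus_carrier_mat) auto
  have "four_block_mat (t \<cdot>\<^sub>m 1\<^sub>m n) (0\<^sub>m n k) W C4 *
       four_block_mat (1\<^sub>m n) ((1/t) \<cdot>\<^sub>m U) (0\<^sub>m k n) (1\<^sub>m k)
     = four_block_mat (t \<cdot>\<^sub>m 1\<^sub>m n * 1\<^sub>m n + 0\<^sub>m n k * 0\<^sub>m k n) (t \<cdot>\<^sub>m 1\<^sub>m n * ((1/t) \<cdot>\<^sub>m U) + 0\<^sub>m n k * 1\<^sub>m k)
         (W * 1\<^sub>m n + C4 * 0\<^sub>m k n) (W * ((1/t) \<cdot>\<^sub>m U) + C4 * 1\<^sub>m k)"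
    by (rule mult_four_block_mat, insert U W C4, auto)
  also have "\<dots> = Big" unfolding Big_def
    apply (rule cong_four_block_mat; rule eq_matI) using U W UW C4 t 
    apply (auto simp: C4_def)
    done
  finally have Bd2: "Big = four_block_mat (t \<cdot>\<^sub>m 1\<^sub>m n) (0\<^sub>m n k) W C4 *
       four_block_mat (1\<^sub>m n) ((1/t) \<cdot>\<^sub>m U) (0\<^sub>m k n) (1\<^sub>m k)" by simp
  have e2: "det Big = t ^ n * det C4"
  proof -
    have "det Big = det (four_block_mat (t \<cdot>\<^sub>m 1\<^sub>m n) (0\<^sub>m n k) W C4) *
       det (four_block_mat (1\<^sub>m n) ((1/t) \<cdot>\<^sub>m U) (0\<^sub>m k n) (1\<^sub>m k))"
      unfolding Bd2 by (rule det_mult[of _ "n+k"], insert U W C4, auto)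
    also have "det (four_block_mat (1\<^sub>m n) ((1/t) \<cdot>\<^sub>m U) (0\<^sub>m k n) (1\<^sub>m k)) = 1"
      by (subst det_four_block_mat_lower_left_zero[of _ n _ k], insert U, auto)
    also have "det (four_block_mat (t \<cdot>\<^sub>m 1\<^sub>m n) (0\<^sub>m n k) W C4) = t ^ n * det C4"
      by (subst det_four_block_mat_upper_right_zero[of _ n _ k], insert W C4, auto)
    finally show ?thesis by simp
  qed
  have "t ^ k * det C4 = det (t \<cdot>\<^sub>m C4)" using C4 by simp
  also have "t \<cdot>\<^sub>m C4 = t \<cdot>\<^sub>m 1\<^sub>m k - W * U"
    unfolding C4_def by (rule eq_matI, insert WU t U W, auto simp: right_diff_distrib)
  finally show ?thesis using e1 e2 by (metis mult.left_commute)
qed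

lemma det2: assumes A: "(A :: 'a :: comm_ring_1 mat) \<in> carrier_mat 2 2"
  shows "det A = A$$(0,0) * A$$(1,1) - A$$(0,1) * A$$(1,0)"
proof -
  have "det A = (\<Sum>j<2. A $$ (0,j) * cofactor A 0 j)"
    by (rule laplace_expansion_row[OF A], simp)
  also have "\<dots> = A$$(0,0) * A$$(1,1) - A$$(0,1) * A$$(1,0)"
    using A
    by (simp add: numeral_2_eq_2 lessThan_Suc cofactor_def det_def mat_delete_def insert_index_def)
  finally show ?thesis .
qed

lemma det3: assumes A: "(A :: 'a :: comm_ring_1 mat) \<in> carrier_mat 3 3"
  shows "det A = A$$(0,0) * (A$$(1,1) * A$$(2,2) - A$$(1,2) * A$$(2,1))
     - A$$(0,1) * (A$$(1,0) * A$$(2,2) - A$$(1,2) * A$$(2,0))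
     + A$$(0,2) * (A$$(1,0) * A$$(2,1) - A$$(1,1) * A$$(2,0))"
proof -
  have "det A = (\<Sum>j<3. A $$ (0,j) * cofactor A 0 j)"
    by (rule laplace_expansion_row[OF A], simp)
  also have "\<dots> = A $$ (0,0) * cofactor A 0 0 + A $$ (0,1) * cofactor A 0 1 + A $$ (0,2) * cofactor A 0 2"
    by (simp add: numeral_3_eq_3 lessThan_Suc numeral_2_eq_2)
  also have "cofactor A 0 0 = A$$(1,1) * A$$(2,2) - A$$(1,2) * A$$(2,1)"
    unfolding cofactor_def using A
    by (subst det2, auto simp: mat_delete_def insert_index_def numeral_2_eq_2)
  also have "cofactor A 0 1 = - (A$$(1,0) * A$$(2,2) - A$$(1,2) * A$$(2,0))"
    unfolding cofactor_def using A
    by (subst det2, auto simp: mat_delete_def insert_index_def numeral_2_eq_2)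
  also have "cofactor A 0 2 = A$$(1,0) * A$$(2,1) - A$$(1,1) * A$$(2,0)"
    unfolding cofactor_def using A
    by (subst det2, auto simp: mat_delete_def insert_index_def numeral_2_eq_2)
  finally show ?thesis by (simp add: algebra_simps)
qed

lemma sum_split3:
  fixes h :: "nat \<Rightarrow> real"
  assumes q: "q < n" and P: "P \<subseteq> {0..<n} - {q}"
  shows "(\<Sum>r\<in>{0..<n}. h r) = h q + (\<Sum>r\<in>P. h r) + (\<Sum>r\<in>{0..<n} - {q} - P. h r)"
proof -
  have "(\<Sum>r\<in>{0..<n}. h r) = h q + (\<Sum>r\<in>{0..<n} - {q}. h r)"
    using q by (subst sum.remove[of _ q]) auto
  also have "(\<Sum>r\<in>{0..<n} - {q}. h r) = (\<Sum>r\<in>P. h r) + (\<Sum>r\<in>{0..<n} - {q} - P. h r)"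
    using P by (subst sum.subset_diff[of P]) auto
  finally show ?thesis by simp
qed

lemma card_rest: assumes q: "q < n" and P: "P \<subseteq> {0..<n} - {q}"
  shows "card ({0..<n} - {q} - P) = n - 1 - card P" "card P \<le> n - 1"
proof -
  have "card ({0..<n} - {q}) = n - 1" using q by simp
  moreover have "finite P" using P finite_subset by blast
  ultimately show "card ({0..<n} - {q} - P) = n - 1 - card P" using P
    by (simp add: card_Diff_subset)
  show "card P \<le> n - 1" using P card_mono[OF _ P] q by simp
qed

lemma sum_cases:
  fixes h :: "nat \<Rightarrow> real"
  assumes q: "q < n" and P: "P \<subseteq> {0..<n} - {q}"
    and hq: "h q = a" and hP: "\<And>r. r \<in> P \<Longrightarrow> h r = b"
    and hR: "\<And>r. r < n \<Longrightarrow> r \<noteq> q \<Longrightarrow> r \<notin> P \<Longrightarrow> h r = c"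
  shows "(\<Sum>r\<in>{0..<n}. h r) = a + real (card P) * b + (real n - 1 - real (card P)) * c"
proof -
  have "(\<Sum>r\<in>P. h r) = (\<Sum>r\<in>P. b)" using hP by simp
  moreover have "(\<Sum>r\<in>{0..<n} - {q} - P. h r) = (\<Sum>r\<in>{0..<n} - {q} - P. c)" using hR by simp
  moreover have "real (card ({0..<n} - {q} - P)) = real n - 1 - real (card P)"
    using card_rest[OF q P] q by simp
  ultimately show ?thesis using sum_split3[OF q P, of h] hq by simp
qed

lemma poly_eq_except:
  fixes p r :: "real poly"
  assumes "\<And>x. x \<noteq> c \<Longrightarrow> poly p x = poly r x"
  shows "p = r"
proof (rule ccontr)
  assume "p \<noteq> r"
  hence "p - r \<noteq> 0" by simp
  hence fin: "finite {x. poly (p - r) x = 0}" by (rule poly_roots_finite)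
  have "UNIV - {c} \<subseteq> {x. poly (p - r) x = 0}" using assms by auto
  hence "finite (UNIV - {c} :: real set)" using fin finite_subset by blast
  thus False using infinite_UNIV_char_0[where 'a=real] by simp
qed

lemma char_poly_struct:
  fixes A :: "real mat" and n q d :: nat and P :: "nat set" and w :: "nat \<Rightarrow> real"
  assumes A: "A \<in> carrier_mat n n" and q: "q < n" and P: "P \<subseteq> {0..<n} - {q}" and cP: "card P = d"
    and n3: "n \<ge> 3"
    and ent: "\<And>r c. r < n \<Longrightarrow> c < n \<Longrightarrow> A $$ (r,c) =
       (if r = c then 0 else if r = q then w c else if c = q then w r else 2)"
    and w: "\<And>r. w r = (if r \<in> P then real d - 1 else real d + 1)"
  shows "char_poly A =
    [:2, 1:] ^ (n - 3) *
    [: - 2 * (real d - 1)^2 * (real n - 1),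
       - (real n * (real d)^2 - 5 * (real d)^2 + 2 * real n * real d - 2 * real d + 5 * real n - 9),
       - (2 * real n - 6),
       1 :]"
proof (rule poly_eq_except[where c = "-2"])
  fix x :: real assume x: "x \<noteq> -2"
  define t where "t = x + 2"
  have t: "t \<noteq> 0" using x unfolding t_def by simp
  define e where "e = (\<lambda>r::nat. if r = q then 0 else (1::real))"
  define \<delta> where "\<delta> = (\<lambda>r::nat. if r = q then 1 else (0::real))"
  define v where "v = (\<lambda>r::nat. if r = q then 0 else w r)"
  define U where "U = mat n 3 (\<lambda>(r,k). if k = 0 then e r else if k = 1 then v r else \<delta> r)"
  define W where "W = mat 3 n (\<lambda>(k,r). if k = 0 then 2 * e r else if k = 1 then \<delta> r else v r + 2 * \<delta> r)"
  have U: "U \<in> carrier_mat n 3" and W: "W \<in> carrier_mat 3 n" unfolding U_def W_def by auto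
  have sum3: "\<And>f. (\<Sum>k\<in>{0..<3::nat}. f k) = f 0 + f 1 + (f 2 :: real)"
    by (simp add: numeral_3_eq_3 numeral_2_eq_2)
  have UW: "U * W = A + 2 \<cdot>\<^sub>m 1\<^sub>m n"
  proof (rule eq_matI)
    fix r c assume r: "r < dim_row (A + 2 \<cdot>\<^sub>m 1\<^sub>m n)" and c: "c < dim_col (A + 2 \<cdot>\<^sub>m 1\<^sub>m n)"
    hence rc: "r < n" "c < n" using A by auto
    show "(U * W) $$ (r, c) = (A + 2 \<cdot>\<^sub>m 1\<^sub>m n) $$ (r, c)"
      using rc A U W
      by (simp add: U_def W_def scalar_prod_def sum3 ent e_def \<delta>_def v_def)
  qed (insert A U W, auto)
  have "poly (char_poly A) x = det (- char_matrix A x)" by (rule char_poly_matrix[OF A])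
  also have "- char_matrix A x = t \<cdot>\<^sub>m 1\<^sub>m n - U * W"
    unfolding UW t_def char_matrix_def by (rule eq_matI, insert A, auto)
  finally have cp: "poly (char_poly A) x = det (t \<cdot>\<^sub>m 1\<^sub>m n - U * W)" .
  have syl: "t ^ 3 * det (t \<cdot>\<^sub>m 1\<^sub>m n - U * W) = t ^ n * det (t \<cdot>\<^sub>m 1\<^sub>m 3 - W * U)"
    by (rule sylvester_det[OF U W t])
  have wu: "\<And>k l. k < 3 \<Longrightarrow> l < 3 \<Longrightarrow> (W * U) $$ (k,l) = (\<Sum>r\<in>{0..<n}. W $$ (k,r) * U $$ (r,l))"
    using U W by (simp add: scalar_prod_def)
  define D where "D = real d"
  define N where "N = real n"
  define S where "S = D * (D - 1) + (N - 1 - D) * (D + 1)"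
  define Q where "Q = D * (D - 1)^2 + (N - 1 - D) * (D + 1)^2"
  note sc = sum_cases[OF q P]
  have Pn: "\<And>r. r \<in> P \<Longrightarrow> r < n" and Pq: "\<And>r. r \<in> P \<Longrightarrow> r \<noteq> q" using P by auto
  have m00: "(W * U) $$ (0,0) = 2 * (N - 1)"
    apply (subst wu; (simp; fail)?)
    apply (subst sc[where a = 0 and b = 2 and c = 2])
    using P q by (auto simp: Pn Pq U_def W_def e_def v_def \<delta>_def N_def D_def cP algebra_simps)
  have m01: "(W * U) $$ (0,1) = 2 * S"
    apply (subst wu; (simp; fail)?)
    apply (subst sc[where a = 0 and b = "2 * (D - 1)" and c = "2 * (D + 1)"])
    using P q by (auto simp: Pn Pq U_def W_def e_def v_def \<delta>_def N_def D_def S_def cP w algebra_simps)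
  have m02: "(W * U) $$ (0,2) = 0"
    apply (subst wu; (simp; fail)?)
    apply (subst sc[where a = 0 and b = 0 and c = 0])
    using P q by (auto simp: Pn Pq U_def W_def e_def v_def \<delta>_def N_def D_def S_def cP w algebra_simps)
  have m10: "(W * U) $$ (1,0) = 0"
    apply (subst wu; (simp; fail)?)
    apply (subst sc[where a = 0 and b = 0 and c = 0])
    using P q by (auto simp: Pn Pq U_def W_def e_def v_def \<delta>_def N_def D_def S_def cP w algebra_simps)
  have m11: "(W * U) $$ (1,1) = 0"
    apply (subst wu; (simp; fail)?)
    apply (subst sc[where a = 0 and b = 0 and c = 0])
    using P q by (auto simp: Pn Pq U_def W_def e_def v_def \<delta>_def N_def D_def S_def cP w algebra_simps)
  have m12: "(W * U) $$ (1,2) = 1"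
    apply (subst wu; (simp; fail)?)
    apply (subst sc[where a = 1 and b = 0 and c = 0])
    using P q by (auto simp: Pn Pq U_def W_def e_def v_def \<delta>_def N_def D_def S_def cP w algebra_simps)
  have m20: "(W * U) $$ (2,0) = S"
    apply (subst wu; (simp; fail)?)
    apply (subst sc[where a = 0 and b = "D - 1" and c = "D + 1"])
    using P q by (auto simp: Pn Pq U_def W_def e_def v_def \<delta>_def N_def D_def S_def cP w algebra_simps)
  have m21: "(W * U) $$ (2,1) = Q"
    apply (subst wu; (simp; fail)?)
    apply (subst sc[where a = 0 and b = "(D - 1)^2" and c = "(D + 1)^2"])
    using P q by (auto simp: Pn Pq U_def W_def e_def v_def \<delta>_def N_def D_def Q_def cP w algebra_simps power2_eq_square)
  have m22: "(W * U) $$ (2,2) = 2"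
    apply (subst wu; (simp; fail)?)
    apply (subst sc[where a = 2 and b = 0 and c = 0])
    using P q by (auto simp: Pn Pq U_def W_def e_def v_def \<delta>_def N_def D_def Q_def cP w algebra_simps power2_eq_square)
  have WU: "W * U \<in> carrier_mat 3 3" using U W by auto
  have dWU: "dim_row (W * U) = 3" "dim_col (W * U) = 3" using WU by auto
  have e00: "(t \<cdot>\<^sub>m 1\<^sub>m 3 - W * U) $$ (0,0) = t - 2 * (N - 1)" using dWU m00 by simp
  have e01: "(t \<cdot>\<^sub>m 1\<^sub>m 3 - W * U) $$ (0,1) = - (2 * S)" using dWU m01 by simp
  have e02: "(t \<cdot>\<^sub>m 1\<^sub>m 3 - W * U) $$ (0,2) = 0" using dWU m02 by simp
  have e10: "(t \<cdot>\<^sub>m 1\<^sub>m 3 - W * U) $$ (1,0) = 0" using dWU m10 by simp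
  have e11: "(t \<cdot>\<^sub>m 1\<^sub>m 3 - W * U) $$ (1,1) = t" using dWU m11 by simp
  have e12: "(t \<cdot>\<^sub>m 1\<^sub>m 3 - W * U) $$ (1,2) = - 1" using dWU m12 by simp
  have e20: "(t \<cdot>\<^sub>m 1\<^sub>m 3 - W * U) $$ (2,0) = - S" using dWU m20 by simp
  have e21: "(t \<cdot>\<^sub>m 1\<^sub>m 3 - W * U) $$ (2,1) = - Q" using dWU m21 by simp
  have e22: "(t \<cdot>\<^sub>m 1\<^sub>m 3 - W * U) $$ (2,2) = t - 2" using dWU m22 by simp
  have d3: "det (t \<cdot>\<^sub>m 1\<^sub>m 3 - W * U) = (t - 2 * (N - 1)) * (t * (t - 2) - Q) - 2 * S * S"
    apply (subst det3) using WU apply (auto intro!: minus_carrier_mat)[1]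
    unfolding e00 e01 e02 e10 e11 e12 e20 e21 e22 by (simp add: algebra_simps)
  show "poly (char_poly A) x = poly ([:2, 1:] ^ (n - 3) *
    [: - 2 * (real d - 1)^2 * (real n - 1),
       - (real n * (real d)^2 - 5 * (real d)^2 + 2 * real n * real d - 2 * real d + 5 * real n - 9),
       - (2 * real n - 6),
       1 :]) x" (is "_ = poly (?a * ?b) x")
  proof -
    have nn: "t ^ n = t ^ (n - 3) * t ^ 3" using n3 by (metis le_add_diff_inverse2 power_add)
    have X: "det (t \<cdot>\<^sub>m 1\<^sub>m n - U * W) = t ^ (n - 3) * ((t - 2 * (N - 1)) * (t * (t - 2) - Q) - 2 * S * S)"
      using syl t unfolding d3 nn by simp
    have pa: "poly ?a x = t ^ (n - 3)" by (simp add: poly_power t_def add.commute)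
    have pb: "poly ?b x = (t - 2 * (N - 1)) * (t * (t - 2) - Q) - 2 * S * S"
      unfolding t_def S_def Q_def N_def D_def by (simp add: algebra_simps power2_eq_square)
    show ?thesis unfolding poly_mult pa pb cp X ..
  qed
qed

lemma walk_single[simp]: "is_walk V E [x] \<longleftrightarrow> x \<in> V"
  unfolding is_walk_def by auto

lemma walk_Cons2[simp]: "is_walk V E (x # y # vs) \<longleftrightarrow> x \<in> V \<and> {x, y} \<in> E \<and> is_walk V E (y # vs)"
  unfolding is_walk_def
  apply (auto simp: less_Suc_eq_0_disj)
  done

lemma walk_nonempty: "is_walk V E vs \<Longrightarrow> vs \<noteq> []"
  unfolding is_walk_def by auto

lemma walk_set: "is_walk V E vs \<Longrightarrow> set vs \<subseteq> V"
  unfolding is_walk_def by auto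

lemma walk_edge: "is_walk V E vs \<Longrightarrow> Suc k < length vs \<Longrightarrow> {vs ! k, vs ! Suc k} \<in> E"
  unfolding is_walk_def by auto

lemma walk_append: "is_walk V E xs \<Longrightarrow> is_walk V E ys \<Longrightarrow> last xs = hd ys \<Longrightarrow> is_walk V E (xs @ tl ys)"
proof (induction xs rule: induct_list012)
  case 1 thus ?case by (simp add: is_walk_def)
next
  case (2 x) thus ?case by (cases ys) auto
next
  case (3 x y zs) thus ?case by auto
qed

lemma walk_append_hd_last:
  assumes "xs \<noteq> []" "ys \<noteq> []" "last xs = hd ys"
  shows "hd (xs @ tl ys) = hd xs" "last (xs @ tl ys) = last ys"
  using assms by (auto simp: last_append) (cases ys; auto)+

lemma walk_rev: "is_walk V E vs \<Longrightarrow> is_walk V E (rev vs)"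
proof (induction vs rule: induct_list012)
  case 1 thus ?case by simp
next
  case (2 x) thus ?case by simp
next
  case (3 x y zs)
  hence "is_walk V E (rev zs @ [y])" by simp
  moreover have "is_walk V E [y, x]" using 3 walk_set[of V E "y#zs"] by (auto simp: insert_commute)
  ultimately show ?case using walk_append[of V E "rev zs @ [y]" "[y,x]"] by simp
qed

lemma walk_take: "is_walk V E vs \<Longrightarrow> 0 < k \<Longrightarrow> is_walk V E (take k vs)"
  unfolding is_walk_def by (auto dest: in_set_takeD)

lemma walk_drop: "is_walk V E vs \<Longrightarrow> k < length vs \<Longrightarrow> is_walk V E (drop k vs)"
  unfolding is_walk_def by (auto dest: in_set_dropD)

lemma gdist_le: "is_walk V E vs \<Longrightarrow> hd vs = u \<Longrightarrow> last vs = v \<Longrightarrow> gdist V E u v \<le> length vs - 1"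
  unfolding gdist_def
  apply (rule Least_le)
  apply (rule exI[of _ vs])
  apply (auto dest: walk_nonempty)
  done

lemma gdist_walk: assumes "connected_graph V E" "u \<in> V" "v \<in> V"
  shows "\<exists>vs. is_walk V E vs \<and> hd vs = u \<and> last vs = v \<and> length vs = Suc (gdist V E u v)"
proof -
  obtain vs where vs: "is_walk V E vs" "hd vs = u" "last vs = v"
    using assms unfolding connected_graph_def by blast
  hence "\<exists>k vs. is_walk V E vs \<and> hd vs = u \<and> last vs = v \<and> length vs = Suc k"
    by (intro exI[of _ "length vs - 1"] exI[of _ vs]) (auto dest: walk_nonempty)
  thus ?thesis unfolding gdist_def by (rule LeastI_ex)
qed

lemma gdist_refl[simp]: "u \<in> V \<Longrightarrow> gdist V E u u = 0"
  using gdist_le[of V E "[u]" u u] by simp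

lemma gdist_zero: assumes "connected_graph V E" "u \<in> V" "v \<in> V" "gdist V E u v = 0"
  shows "u = v"
proof -
  obtain vs where "is_walk V E vs" "hd vs = u" "last vs = v" "length vs = Suc 0"
    using gdist_walk[OF assms(1-3)] assms(4) by auto
  thus ?thesis by (cases vs) auto
qed

lemma gdist_sym: assumes "connected_graph V E" "u \<in> V" "v \<in> V"
  shows "gdist V E u v = gdist V E v u"
proof -
  have le: "gdist V E y x \<le> gdist V E x y" if xy: "x \<in> V" "y \<in> V" for x y
  proof -
    obtain vs where vs: "is_walk V E vs" "hd vs = x" "last vs = y" "length vs = Suc (gdist V E x y)"
      using gdist_walk[OF assms(1) xy] by auto
    have "vs \<noteq> []" using vs by auto
    thus ?thesis using gdist_le[OF walk_rev[OF vs(1)], of y x] vs by (simp add: hd_rev last_rev)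
  qed
  show ?thesis using le[of u v] le[of v u] assms by simp
qed

lemma gdist_tri: assumes "connected_graph V E" "u \<in> V" "v \<in> V" "w \<in> V"
  shows "gdist V E u w \<le> gdist V E u v + gdist V E v w"
proof -
  obtain xs where xs: "is_walk V E xs" "hd xs = u" "last xs = v" "length xs = Suc (gdist V E u v)"
    using gdist_walk[OF assms(1-3)] by auto
  obtain ys where ys: "is_walk V E ys" "hd ys = v" "last ys = w" "length ys = Suc (gdist V E v w)"
    using gdist_walk[OF assms(1) assms(3,4)] by auto
  have ne: "xs \<noteq> []" "ys \<noteq> []" using xs ys by auto
  have "gdist V E u w \<le> length (xs @ tl ys) - 1"
    by (rule gdist_le[OF walk_append[OF xs(1) ys(1)]])
       (use xs ys ne walk_append_hd_last[OF ne] in auto)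
  thus ?thesis using xs ys by simp
qed

lemma gdist_edge: "{u, v} \<in> E \<Longrightarrow> u \<in> V \<Longrightarrow> v \<in> V \<Longrightarrow> gdist V E u v \<le> 1"
  using gdist_le[of V E "[u, v]" u v] by simp

lemma geo_prefix: assumes vs: "is_walk V E vs" "hd vs = u" and m: "m < length vs"
  shows "gdist V E u (vs ! m) \<le> m"
proof -
  have ne: "take (Suc m) vs \<noteq> []" using m by (cases vs) auto
  have l: "last (take (Suc m) vs) = vs ! m" using m by (simp add: last_conv_nth[OF ne])
  have h: "hd (take (Suc m) vs) = u" using vs by simp
  have "gdist V E u (vs ! m) \<le> length (take (Suc m) vs) - 1"
    by (rule gdist_le[OF walk_take[OF vs(1)] h l]) simp
  thus ?thesis using m by simp
qed

lemma geo_suffix: "is_walk V E vs \<Longrightarrow> last vs = v \<Longrightarrow> m < length vs \<Longrightarrow> gdist V E (vs ! m) v \<le> length vs - 1 - m"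
  using gdist_le[OF walk_drop[of V E vs m], of "vs ! m" v]
  by (auto simp: hd_drop_conv_nth last_drop)

lemma in_set_tl: "x \<in> set (tl xs) \<Longrightarrow> x \<in> set xs"
  by (cases xs) auto

lemma tree_edge: assumes "is_tree V E" "{a, b} \<in> E" shows "a \<noteq> b" "a \<in> V" "b \<in> V"
proof -
  obtain u v where "u \<noteq> v" "u \<in> V" "v \<in> V" "{a, b} = {u, v}"
    using assms unfolding is_tree_def simple_graph_def by blast
  thus "a \<noteq> b" "a \<in> V" "b \<in> V" by (auto simp: doubleton_eq_iff)
qed

lemma tree_conn: "is_tree V E \<Longrightarrow> connected_graph V E"
  unfolding is_tree_def by auto

lemma path_of_walk: "is_walk V E vs \<Longrightarrow> \<exists>ps. is_walk V E ps \<and> distinct ps \<and> hd ps = hd vs \<and> last ps = last vs \<and> set ps \<subseteq> set vs"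
proof (induction "length vs" arbitrary: vs rule: less_induct)
  case less
  show ?case
  proof (cases "distinct vs")
    case True thus ?thesis using less by blast
  next
    case False
    then obtain p q where pq: "p < q" "q < length vs" "vs ! p = vs ! q"
      by (auto simp: distinct_conv_nth) (metis linorder_neqE_nat)
    define xs where "xs = take (Suc p) vs"
    define ys where "ys = drop q vs"
    have xw: "is_walk V E xs" unfolding xs_def by (rule walk_take[OF less.prems]) simp
    have yw: "is_walk V E ys" unfolding ys_def by (rule walk_drop[OF less.prems pq(2)])
    have nex: "xs \<noteq> []" using xw by (rule walk_nonempty)
    have ney: "ys \<noteq> []" using yw by (rule walk_nonempty)
    have lx: "last xs = vs ! p" using pq nex unfolding xs_def by (simp add: last_conv_nth)
    have hy: "hd ys = vs ! q" using pq unfolding ys_def by (simp add: hd_drop_conv_nth)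
    have lxy: "last xs = hd ys" using lx hy pq by simp
    define ws where "ws = xs @ tl ys"
    have ww: "is_walk V E ws" unfolding ws_def by (rule walk_append[OF xw yw lxy])
    have hw: "hd ws = hd vs" unfolding ws_def using walk_append_hd_last[OF nex ney lxy] nex
      unfolding xs_def by simp
    have lw: "last ws = last vs" unfolding ws_def using walk_append_hd_last[OF nex ney lxy] pq
      unfolding ys_def by simp
    have sw: "set ws \<subseteq> set vs" unfolding ws_def xs_def ys_def
      by (auto dest: in_set_takeD in_set_dropD in_set_tl)
    have len: "length ws < length vs" unfolding ws_def xs_def ys_def using pq by simp
    from less.hyps[OF len ww] hw lw sw show ?thesis by (metis order_trans)
  qed
qed

lemma no_cycle:
  assumes T: "is_tree V E" and e1: "{y, u} \<in> E" and e2: "{y, u'} \<in> E" and uu: "u \<noteq> u'"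
    and W: "is_walk V E W" "hd W = u" "last W = u'" "y \<notin> set W"
  shows False
proof -
  obtain ps where ps: "is_walk V E ps" "distinct ps" "hd ps = u" "last ps = u'" "set ps \<subseteq> set W"
    using path_of_walk[OF W(1)] W by auto
  have ne: "ps \<noteq> []" using ps(1) by (rule walk_nonempty)
  have len: "length ps \<ge> 2"
  proof (rule ccontr)
    assume "\<not> length ps \<ge> 2"
    then obtain z where "ps = [z]" using ne by (cases ps) (auto, cases "tl ps", auto)
    thus False using ps uu by simp
  qed
  have yps: "y \<notin> set ps" using ps W by auto
  have yV: "y \<in> V" using tree_edge[OF T e1] by simp
  obtain z zs where zs: "ps = z # zs" using ne by (cases ps) auto
  have cw: "is_walk V E (y # ps)" using ps zs yV e1 by simp
  have "length (y # ps) \<ge> 3" "distinct (y # ps)" using len ps yps by auto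
  moreover have "{last (y # ps), hd (y # ps)} \<in> E" using ps ne e2 by (simp add: insert_commute)
  ultimately show False using T cw unfolding is_tree_def acyclic_graph_def by blast
qed

lemma geo_walk_avoid:
  assumes T: "is_tree V E" and x: "x \<in> V" and u: "u \<in> V" and yu: "y \<noteq> u"
    and le: "gdist V E x u \<le> gdist V E x y"
  shows "\<exists>P. is_walk V E P \<and> hd P = x \<and> last P = u \<and> y \<notin> set P"
proof -
  obtain P where P: "is_walk V E P" "hd P = x" "last P = u" "length P = Suc (gdist V E x u)"
    using gdist_walk[OF tree_conn[OF T] x u] by auto
  have "y \<notin> set P"
  proof
    assume "y \<in> set P"
    then obtain m where m: "m < length P" "P ! m = y" by (auto simp: in_set_conv_nth)
    have "gdist V E x y \<le> m" using geo_prefix[OF P(1,2) m(1)] m by simp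
    hence "m = length P - 1" using m P le by simp
    hence "y = last P" using m P by (simp add: last_conv_nth walk_nonempty)
    thus False using yu P by simp
  qed
  thus ?thesis using P by blast
qed

lemma two_low_nbrs:
  assumes T: "is_tree V E" and x: "x \<in> V" and e1: "{y, u} \<in> E" and e2: "{y, u'} \<in> E"
    and uu: "u \<noteq> u'"
    and l1: "gdist V E x u \<le> gdist V E x y" and l2: "gdist V E x u' \<le> gdist V E x y"
  shows False
proof -
  have V: "y \<in> V" "u \<in> V" "u' \<in> V" "y \<noteq> u" "y \<noteq> u'"
    using tree_edge[OF T e1] tree_edge[OF T e2] by auto
  obtain P where P: "is_walk V E P" "hd P = x" "last P = u" "y \<notin> set P"
    using geo_walk_avoid[OF T x V(2) V(4) l1] by auto
  obtain P' where P': "is_walk V E P'" "hd P' = x" "last P' = u'" "y \<notin> set P'"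
    using geo_walk_avoid[OF T x V(3) V(5) l2] by auto
  have ne: "rev P \<noteq> []" "P' \<noteq> []" using P P' by (auto dest: walk_nonempty)
  have lh: "last (rev P) = hd P'" using P P' ne by (simp add: last_rev)
  have W: "is_walk V E (rev P @ tl P')" by (rule walk_append[OF walk_rev[OF P(1)] P'(1) lh])
  have "hd (rev P @ tl P') = u" "last (rev P @ tl P') = u'"
    using walk_append_hd_last[OF ne lh] P P' ne by (auto simp: hd_rev)
  moreover have "y \<notin> set (rev P @ tl P')" using P P' by (auto dest: in_set_tl)
  ultimately show False using no_cycle[OF T e1 e2 uu W] by blast
qed

lemma edge_dist_ne:
  assumes T: "is_tree V E" and x: "x \<in> V" and e: "{a, b} \<in> E"
  shows "gdist V E x a \<noteq> gdist V E x b"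
proof
  assume eq: "gdist V E x a = gdist V E x b"
  have ab: "a \<noteq> b" "a \<in> V" "b \<in> V" using tree_edge[OF T e] by auto
  note C = tree_conn[OF T]
  show False
  proof (cases "gdist V E x a = 0")
    case True
    hence "x = a" "x = b" using gdist_zero[OF C x] ab eq by auto
    thus False using ab by simp
  next
    case False
    define m where "m = gdist V E x a"
    obtain P where P: "is_walk V E P" "hd P = x" "last P = a" "length P = Suc m"
      using gdist_walk[OF C x ab(2)] unfolding m_def by auto
    have m0: "m > 0" using False m_def by simp
    have Pm: "P ! m = a" using P walk_nonempty[OF P(1)] by (simp add: last_conv_nth)
    have ed: "{P ! (m - 1), P ! Suc (m - 1)} \<in> E" by (rule walk_edge[OF P(1)]) (use P m0 in simp)
    hence ed': "{a, P ! (m - 1)} \<in> E" using Pm m0 by (simp add: insert_commute)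
    have gw: "gdist V E x (P ! (m - 1)) \<le> m - 1" by (rule geo_prefix[OF P(1,2)]) (use P in simp)
    have ne: "P ! (m - 1) \<noteq> b"
    proof
      assume "P ! (m - 1) = b" thus False using gw eq m0 unfolding m_def by simp
    qed
    show False
      by (rule two_low_nbrs[OF T x ed' e ne]) (use gw eq m_def in auto)
  qed
qed

lemma edge_dist_diff:
  assumes T: "is_tree V E" and x: "x \<in> V" and e: "{a, b} \<in> E"
  shows "gdist V E x b = gdist V E x a + 1 \<or> gdist V E x a = gdist V E x b + 1"
proof -
  note C = tree_conn[OF T]
  have ab: "a \<noteq> b" "a \<in> V" "b \<in> V" using tree_edge[OF T e] by auto
  have "gdist V E a b \<le> 1" "gdist V E b a \<le> 1" using gdist_edge[OF e ab(2,3)]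
    gdist_sym[OF C ab(2,3)] by auto
  moreover have "gdist V E x b \<le> gdist V E x a + gdist V E a b" by (rule gdist_tri[OF C x ab(2,3)])
  moreover have "gdist V E x a \<le> gdist V E x b + gdist V E b a" by (rule gdist_tri[OF C x ab(3,2)])
  ultimately show ?thesis using edge_dist_ne[OF T x e] by linarith
qed

lemma walk_parity:
  assumes T: "is_tree V E" and x: "x \<in> V"
  shows "is_walk V E vs \<Longrightarrow> even (length vs - 1 + gdist V E x (hd vs) + gdist V E x (last vs))"
proof (induction vs rule: induct_list012)
  case 1 thus ?case by (simp add: is_walk_def)
next
  case (2 z) thus ?case by simp
next
  case (3 z y zs)
  have e: "{z, y} \<in> E" using 3 by simp
  have "even (length zs + gdist V E x y + gdist V E x (last (y # zs)))" using 3 by simp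
  thus ?case using edge_dist_diff[OF T x e] by auto
qed

lemma dist_parity:
  assumes T: "is_tree V E" and u: "u \<in> V" and v: "v \<in> V" and w: "w \<in> V"
  shows "even (gdist V E v w + gdist V E u v + gdist V E u w)"
proof -
  obtain P where P: "is_walk V E P" "hd P = v" "last P = w" "length P = Suc (gdist V E v w)"
    using gdist_walk[OF tree_conn[OF T] v w] by auto
  show ?thesis using walk_parity[OF T u P(1)] P by simp
qed

lemma parent_ex:
  assumes T: "is_tree V E" and x: "x \<in> V" and y: "y \<in> V" and xy: "y \<noteq> x"
  shows "\<exists>u. {u, y} \<in> E \<and> gdist V E x u + 1 = gdist V E x y"
proof -
  note C = tree_conn[OF T]
  define k where "k = gdist V E x y"
  obtain P where P: "is_walk V E P" "hd P = x" "last P = y" "length P = Suc k"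
    using gdist_walk[OF C x y] unfolding k_def by auto
  have k0: "k > 0" using gdist_zero[OF C x y] xy k_def by auto
  have Pk: "P ! k = y" using P walk_nonempty[OF P(1)] by (simp add: last_conv_nth)
  have ed: "{P ! (k - 1), P ! Suc (k - 1)} \<in> E" by (rule walk_edge[OF P(1)]) (use P k0 in simp)
  hence ed': "{P ! (k - 1), y} \<in> E" using Pk k0 by simp
  have gw: "gdist V E x (P ! (k - 1)) \<le> k - 1" by (rule geo_prefix[OF P(1,2)]) (use P in simp)
  have "gdist V E x (P ! (k - 1)) + 1 = k"
    using edge_dist_diff[OF T x ed'] gw k0 k_def by auto
  thus ?thesis using ed' k_def by blast
qed

lemma card_edges:
  assumes T: "is_tree V E" and x: "x \<in> V"
  shows "card E = card V - 1"
proof -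
  define par where "par = (\<lambda>y. SOME u. {u, y} \<in> E \<and> gdist V E x u + 1 = gdist V E x y)"
  have par: "{par y, y} \<in> E \<and> gdist V E x (par y) + 1 = gdist V E x y" if "y \<in> V" "y \<noteq> x" for y
    unfolding par_def by (rule someI_ex, rule parent_ex[OF T x that])
  have fin: "finite V" using T unfolding is_tree_def simple_graph_def by auto
  have "bij_betw (\<lambda>y. {par y, y}) (V - {x}) E"
  proof (rule bij_betwI')
    fix y y' assume y: "y \<in> V - {x}" and y': "y' \<in> V - {x}"
    show "({par y, y} = {par y', y'}) = (y = y')"
    proof
      assume "{par y, y} = {par y', y'}"
      thus "y = y'" using par[of y] par[of y'] y y' by (auto simp: doubleton_eq_iff)
    qed simp
  next
    fix y assume "y \<in> V - {x}" thus "{par y, y} \<in> E" using par by auto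
  next
    fix e assume e: "e \<in> E"
    obtain a b where ab: "e = {a, b}" "a \<in> V" "b \<in> V"
      using T e unfolding is_tree_def simple_graph_def by blast
    have eab: "{a, b} \<in> E" using e ab by simp
    have "\<exists>a' b'. e = {a', b'} \<and> gdist V E x a' + 1 = gdist V E x b' \<and> a' \<in> V \<and> b' \<in> V"
      using edge_dist_diff[OF T x eab] ab by (metis insert_commute)
    then obtain a' b' where ab': "e = {a', b'}" "gdist V E x a' + 1 = gdist V E x b'" "a' \<in> V" "b' \<in> V"
      by blast
    have b'x: "b' \<noteq> x" using ab' x by auto
    have pb: "{par b', b'} \<in> E" "gdist V E x (par b') + 1 = gdist V E x b'" using par[OF ab'(4) b'x] by auto
    have "a' = par b'"
    proof (rule ccontr)
      assume ne: "a' \<noteq> par b'"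
      have e1: "{b', a'} \<in> E" using e ab' by (simp add: insert_commute)
      have e2: "{b', par b'} \<in> E" using pb by (simp add: insert_commute)
      show False by (rule two_low_nbrs[OF T x e1 e2 ne]) (use ab' pb in auto)
    qed
    thus "\<exists>y\<in>V - {x}. e = {par y, y}" using ab' b'x by blast
  qed
  hence "card (V - {x}) = card E" by (rule bij_betw_same_card)
  thus ?thesis using x fin by simp
qed

lemma next_on_geo:
  assumes T: "is_tree V E" and i: "i \<in> V" and j: "j \<in> V" and u: "u \<in> V"
    and on: "gdist V E i u + gdist V E u j = gdist V E i j" and r: "gdist V E u j = Suc r"
  shows "\<exists>w \<in> V. {u, w} \<in> E \<and> gdist V E i w = gdist V E i u + 1 \<and> gdist V E w j = r"
proof -
  note C = tree_conn[OF T]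
  obtain Q where Q: "is_walk V E Q" "hd Q = u" "last Q = j" "length Q = Suc (Suc r)"
    using gdist_walk[OF C u j] r by auto
  have ed: "{Q ! 0, Q ! Suc 0} \<in> E" by (rule walk_edge[OF Q(1)]) (use Q in simp)
  have Q0: "Q ! 0 = u" using Q walk_nonempty[OF Q(1)] by (simp add: hd_conv_nth)
  define w where "w = Q ! 1"
  have e: "{u, w} \<in> E" using ed Q0 w_def by simp
  have wV: "w \<in> V" using tree_edge[OF T e] by simp
  have g1: "gdist V E w j \<le> r" using geo_suffix[OF Q(1,3), of 1] Q unfolding w_def by simp
  have g2: "gdist V E i w \<le> gdist V E i u + gdist V E u w" by (rule gdist_tri[OF C i u wV])
  have g3: "gdist V E u w \<le> 1" by (rule gdist_edge[OF e u wV])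
  have g4: "gdist V E i j \<le> gdist V E i w + gdist V E w j" by (rule gdist_tri[OF C i wV j])
  have "gdist V E i w = gdist V E i u + 1 \<and> gdist V E w j = r" using g1 g2 g3 g4 on r by linarith
  thus ?thesis using wV e by blast
qed

lemma geo_unique:
  assumes T: "is_tree V E" and i: "i \<in> V" and j: "j \<in> V"
  shows "u \<in> V \<Longrightarrow> u' \<in> V \<Longrightarrow> gdist V E i u + gdist V E u j = gdist V E i j \<Longrightarrow>
    gdist V E i u' + gdist V E u' j = gdist V E i j \<Longrightarrow> gdist V E i u = gdist V E i u' \<Longrightarrow> u = u'"
proof (induction "gdist V E u j" arbitrary: u u' rule: less_induct)
  case less
  note C = tree_conn[OF T]
  show ?case
  proof (cases "gdist V E u j")
    case 0
    hence "gdist V E u' j = 0" using less.prems by simp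
    thus ?thesis using gdist_zero[OF C less.prems(1) j] gdist_zero[OF C less.prems(2) j] 0 by simp
  next
    case (Suc r)
    have r': "gdist V E u' j = Suc r" using less.prems Suc by simp
    obtain w where w: "w \<in> V" "{u, w} \<in> E" "gdist V E i w = gdist V E i u + 1" "gdist V E w j = r"
      using next_on_geo[OF T i j less.prems(1,3) Suc] by blast
    obtain w' where w': "w' \<in> V" "{u', w'} \<in> E" "gdist V E i w' = gdist V E i u' + 1" "gdist V E w' j = r"
      using next_on_geo[OF T i j less.prems(2,4) r'] by blast
    have "w = w'"
      by (rule less.hyps[of w w']) (use w w' Suc less.prems in auto)
    show "u = u'"
    proof (rule ccontr)
      assume ne: "u \<noteq> u'"
      have e1: "{w, u} \<in> E" using w by (simp add: insert_commute)
      have e2: "{w, u'} \<in> E" using w' \<open>w = w'\<close> by (simp add: insert_commute)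
      show False by (rule two_low_nbrs[OF T i e1 e2 ne]) (use w w' \<open>w = w'\<close> in auto)
    qed
  qed
qed

definition path_edges :: "'a set \<Rightarrow> 'a set set \<Rightarrow> 'a \<Rightarrow> 'a \<Rightarrow> 'a set set" where
  "path_edges V E i j = {e \<in> E. \<exists>a b. e = {a, b} \<and> gdist V E i a + 1 + gdist V E b j = gdist V E i j}"

lemma card_path_edges:
  assumes T: "is_tree V E" and i: "i \<in> V" and j: "j \<in> V"
  shows "card (path_edges V E i j) = gdist V E i j"
proof -
  note C = tree_conn[OF T]
  define d where "d = gdist V E i j"
  obtain G where G: "is_walk V E G" "hd G = i" "last G = j" "length G = Suc d"
    using gdist_walk[OF C i j] unfolding d_def by auto
  have GV: "G ! k \<in> V" if "k \<le> d" for k using walk_set[OF G(1)] G that by auto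
  have gG: "gdist V E i (G ! k) = k \<and> gdist V E (G ! k) j = d - k" if k: "k \<le> d" for k
  proof -
    have "gdist V E i (G ! k) \<le> k" using geo_prefix[OF G(1,2), of k] G k by simp
    moreover have "gdist V E (G ! k) j \<le> d - k" using geo_suffix[OF G(1,3), of k] G k by simp
    moreover have "d \<le> gdist V E i (G ! k) + gdist V E (G ! k) j"
      unfolding d_def by (rule gdist_tri[OF C i GV[OF k] j])
    ultimately show ?thesis using k by linarith
  qed
  define f where "f = (\<lambda>k. {G ! k, G ! Suc k})"
  have "path_edges V E i j = f ` {0..<d}"
  proof
    show "f ` {0..<d} \<subseteq> path_edges V E i j"
    proof
      fix e assume "e \<in> f ` {0..<d}"
      then obtain k where k: "k < d" "e = f k" by auto
      have "e \<in> E" using walk_edge[OF G(1), of k] G k unfolding f_def by simp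
      moreover have "gdist V E i (G ! k) + 1 + gdist V E (G ! Suc k) j = d"
        using gG[of k] gG[of "Suc k"] k by simp
      moreover have "e = {G ! k, G ! Suc k}" using k f_def by simp
      ultimately show "e \<in> path_edges V E i j" unfolding path_edges_def d_def by blast
    qed
  next
    show "path_edges V E i j \<subseteq> f ` {0..<d}"
    proof
      fix e assume "e \<in> path_edges V E i j"
      then obtain a b where ab: "e \<in> E" "e = {a, b}" "gdist V E i a + 1 + gdist V E b j = d"
        unfolding path_edges_def d_def by blast
      have eab: "{a, b} \<in> E" using ab by simp
      have V: "a \<in> V" "b \<in> V" using tree_edge[OF T eab] by auto
      define k where "k = gdist V E i a"
      have kd: "k < d" using ab k_def by simp
      have t1: "gdist V E a b \<le> 1" by (rule gdist_edge[OF eab V])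
      have t2: "gdist V E a j \<le> gdist V E a b + gdist V E b j" by (rule gdist_tri[OF C V j])
      have t3: "d \<le> gdist V E i a + gdist V E a j" unfolding d_def by (rule gdist_tri[OF C i V(1) j])
      have t4: "gdist V E i b \<le> gdist V E i a + gdist V E a b" by (rule gdist_tri[OF C i V])
      have t5: "d \<le> gdist V E i b + gdist V E b j" unfolding d_def by (rule gdist_tri[OF C i V(2) j])
      have "a = G ! k"
        by (rule geo_unique[OF T i j V(1) GV]) (use gG[of k] kd k_def t1 t2 t3 ab d_def in auto)
      moreover have "b = G ! Suc k"
        by (rule geo_unique[OF T i j V(2) GV]) (use gG[of "Suc k"] kd k_def t1 t4 t5 ab d_def in auto)
      ultimately show "e \<in> f ` {0..<d}" using ab kd unfolding f_def by auto
    qed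
  qed
  moreover have "inj_on f {0..<d}"
  proof (rule inj_onI)
    fix k k' assume k: "k \<in> {0..<d}" and k': "k' \<in> {0..<d}" and eq: "f k = f k'"
    have "G ! k = G ! k' \<and> G ! Suc k = G ! Suc k' \<or> G ! k = G ! Suc k' \<and> G ! Suc k = G ! k'"
      using eq unfolding f_def by (auto simp: doubleton_eq_iff)
    moreover have "k \<le> d" "k' \<le> d" "Suc k \<le> d" "Suc k' \<le> d" using k k' by auto
    ultimately show "k = k'"
    proof (elim disjE conjE)
      assume "G ! k = G ! k'" thus "k = k'" using gG[of k] gG[of k'] \<open>k \<le> d\<close> \<open>k' \<le> d\<close> by metis
    next
      assume a1: "G ! k = G ! Suc k'" and a2: "G ! Suc k = G ! k'"
      have "k = Suc k'" using a1 gG[of k] gG[of "Suc k'"] \<open>k \<le> d\<close> \<open>Suc k' \<le> d\<close> by metis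
      moreover have "Suc k = k'" using a2 gG[of "Suc k"] gG[of k'] \<open>Suc k \<le> d\<close> \<open>k' \<le> d\<close> by metis
      ultimately show "k = k'" by simp
    qed
  qed
  ultimately show ?thesis unfolding d_def[symmetric] by (simp add: card_image)
qed

lemma min4pc_sym:
  assumes C: "connected_graph V E" and V: "a \<in> V" "b \<in> V" "k \<in> V" "l \<in> V"
  shows "min4pc V E (b, a) (k, l) = min4pc V E (a, b) (k, l)"
    and "min4pc V E (k, l) (a, b) = min4pc V E (a, b) (k, l)"
proof -
  have s: "gdist V E x y = gdist V E y x" if "x \<in> V" "y \<in> V" for x y using gdist_sym[OF C that] .
  show "min4pc V E (b, a) (k, l) = min4pc V E (a, b) (k, l)"
    unfolding min4pc_def using s[of a b] V by (simp add: min.commute min.left_commute add.commute)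
  show "min4pc V E (k, l) (a, b) = min4pc V E (a, b) (k, l)"
    unfolding min4pc_def using s[of a l] s[of b k] s[of k a] s[of l b] s[of k l] s[of a b] V
    by (simp add: min.commute min.left_commute add.commute)
qed

lemma min4pc_diag: "a \<in> V \<Longrightarrow> b \<in> V \<Longrightarrow> min4pc V E (a, b) (a, b) = 0"
  unfolding min4pc_def by simp

lemma edge_gdist1: assumes T: "is_tree V E" and e: "{a, b} \<in> E"
  shows "gdist V E a b = 1" "gdist V E b a = 1"
proof -
  note C = tree_conn[OF T]
  have ab: "a \<noteq> b" "a \<in> V" "b \<in> V" using tree_edge[OF T e] by auto
  have "gdist V E a b \<le> 1" by (rule gdist_edge[OF e ab(2,3)])
  moreover have "gdist V E a b \<noteq> 0" using gdist_zero[OF C ab(2,3)] ab by auto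
  ultimately show "gdist V E a b = 1" by simp
  thus "gdist V E b a = 1" using gdist_sym[OF C ab(2,3)] by simp
qed

lemma entry_edges:
  assumes T: "is_tree V E" and e1: "{a, b} \<in> E" and e2: "{a', b'} \<in> E" and ne: "{a, b} \<noteq> {a', b'}"
  shows "min4pc V E (a, b) (a', b') = 2"
proof -
  note C = tree_conn[OF T]
  have V: "a \<in> V" "b \<in> V" "a' \<in> V" "b' \<in> V" using tree_edge[OF T e1] tree_edge[OF T e2] by auto
  have s: "gdist V E x y = gdist V E y x" if "x \<in> V" "y \<in> V" for x y using gdist_sym[OF C that] .
  have z: "gdist V E x y = 0 \<Longrightarrow> x = y" if "x \<in> V" "y \<in> V" for x y using gdist_zero[OF C that] by blast
  have g1: "gdist V E a b = 1" "gdist V E a' b' = 1" using edge_gdist1[OF T e1] edge_gdist1[OF T e2] by auto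
  have P1: "even (gdist V E a a' + gdist V E b a + gdist V E b a')" using dist_parity[OF T V(2,1,3)] .
  have P2: "even (gdist V E b' a' + gdist V E a b' + gdist V E a a')" using dist_parity[OF T V(1,4,3)] .
  have P3: "even (gdist V E a b' + gdist V E b a + gdist V E b b')" using dist_parity[OF T V(2,1,4)] .
  have S1: "even (gdist V E a b' + gdist V E b a')"
    using P1 P2 s[of b a] s[of b' a'] g1 V by (auto; presburger)
  have S2: "even (gdist V E a a' + gdist V E b b')"
    using P1 P2 P3 s[of b a] s[of b' a'] g1 V by (auto; presburger)
  have S1n: "gdist V E a b' + gdist V E b a' \<noteq> 0"
  proof
    assume "gdist V E a b' + gdist V E b a' = 0"
    hence "a = b'" "b = a'" using z V by auto
    thus False using ne by (auto simp: insert_commute)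
  qed
  have S2n: "gdist V E a a' + gdist V E b b' \<noteq> 0"
  proof
    assume "gdist V E a a' + gdist V E b b' = 0"
    hence "a = a'" "b = b'" using z V by auto
    thus False using ne by auto
  qed
  have "min (gdist V E a b' + gdist V E b a')
           (min (gdist V E a a' + gdist V E b b') (gdist V E a b + gdist V E a' b')) = 2"
    using S1 S2 S1n S2n g1 by (auto; presburger)
  thus ?thesis unfolding min4pc_def by simp
qed

lemma path_edges_iff:
  assumes "{a, b} \<in> E"
  shows "{a, b} \<in> path_edges V E i j \<longleftrightarrow>
    gdist V E i a + 1 + gdist V E b j = gdist V E i j \<or> gdist V E i b + 1 + gdist V E a j = gdist V E i j"
  using assms unfolding path_edges_def by (auto simp: doubleton_eq_iff insert_commute)

lemma entry_f_arith:
  fixes A B J1 J2 d :: nat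
  assumes "even (J1 + A + d)" "even (1 + A + B)" "even (1 + J1 + J2)" "d \<le> A + J1" "J1 \<le> 1 + J2"
    "d \<le> B + J2" "J2 \<le> 1 + J1" "d > 1"
  shows "min (J1 + B) (min (A + J2) (1 + d)) = (if A + 1 + J2 = d \<or> B + 1 + J1 = d then d - 1 else d + 1)"
proof -
  have e1: "even (J1 + B + d + 1)" using assms(1,2) by presburger
  have e2: "even (A + J2 + d + 1)" using assms(1,3) by presburger
  have n1: "J1 + B \<noteq> d"
  proof
    assume "J1 + B = d" then have "even (d + d + 1)" using e1 by simp
    thus False by simp
  qed
  have n2: "A + J2 \<noteq> d"
  proof
    assume "A + J2 = d" then have "even (d + d + 1)" using e2 by simp
    thus False by simp
  qed
  show ?thesis using n1 n2 assms(4-8) by (auto simp: min_def)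
qed

lemma entry_f:
  assumes T: "is_tree V E" and i: "i \<in> V" and j: "j \<in> V" and d: "gdist V E i j = d" "d > 1"
    and e: "{a, b} \<in> E"
  shows "min4pc V E (a, b) (i, j) = (if {a, b} \<in> path_edges V E i j then real d - 1 else real d + 1)"
proof -
  note C = tree_conn[OF T]
  have V: "a \<in> V" "b \<in> V" using tree_edge[OF T e] by auto
  have s: "gdist V E x y = gdist V E y x" if "x \<in> V" "y \<in> V" for x y using gdist_sym[OF C that] .
  have g1: "gdist V E a b = 1" "gdist V E b a = 1" using edge_gdist1[OF T e] by auto
  have t1: "gdist V E i j \<le> gdist V E i a + gdist V E a j" by (rule gdist_tri[OF C i V(1) j])
  have t2: "gdist V E a j \<le> gdist V E a b + gdist V E b j" by (rule gdist_tri[OF C V j])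
  have t3: "gdist V E i j \<le> gdist V E i b + gdist V E b j" by (rule gdist_tri[OF C i V(2) j])
  have t4: "gdist V E b j \<le> gdist V E b a + gdist V E a j" by (rule gdist_tri[OF C V(2,1) j])
  have Q1: "even (gdist V E a j + gdist V E i a + gdist V E i j)" using dist_parity[OF T i V(1) j] .
  have Q2: "even (gdist V E a b + gdist V E i a + gdist V E i b)" using dist_parity[OF T i V(1,2)] .
  have Q3: "even (gdist V E a b + gdist V E j a + gdist V E j b)" using dist_parity[OF T j V(1,2)] .
  have sy: "gdist V E b i = gdist V E i b" "gdist V E a i = gdist V E i a"
     "gdist V E j a = gdist V E a j" "gdist V E j b = gdist V E b j"
    using s i j V by auto
  have pe: "{a, b} \<in> path_edges V E i j \<longleftrightarrow>
    gdist V E i a + 1 + gdist V E b j = d \<or> gdist V E i b + 1 + gdist V E a j = d"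
    using path_edges_iff[OF e] d by simp
  have "min (gdist V E a j + gdist V E b i) (min (gdist V E a i + gdist V E b j) (gdist V E a b + gdist V E i j))
     = (if {a, b} \<in> path_edges V E i j then d - 1 else d + 1)"
    unfolding pe sy g1(1) d(1)
    by (rule entry_f_arith) (use Q1 Q2 Q3 g1 t1 t2 t3 t4 d sy in auto)
  thus ?thesis unfolding min4pc_def using d by (simp add: of_nat_diff)
qed

lemma entry_f2:
  assumes T: "is_tree V E" and i: "i \<in> V" and j: "j \<in> V" and d: "gdist V E i j = d" "d > 1"
    and e: "{a, b} \<in> E" and xy: "{x, y} = {i, j}"
  shows "min4pc V E (a, b) (x, y) = (if {a, b} \<in> path_edges V E i j then real d - 1 else real d + 1)"
    "min4pc V E (x, y) (a, b) = (if {a, b} \<in> path_edges V E i j then real d - 1 else real d + 1)"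
proof -
  note C = tree_conn[OF T]
  have V: "a \<in> V" "b \<in> V" using tree_edge[OF T e] by auto
  have "min4pc V E (a, b) (x, y) = min4pc V E (a, b) (i, j)"
  proof (cases "x = i \<and> y = j")
    case True thus ?thesis by simp
  next
    case False
    hence "x = j" "y = i" using xy by (auto simp: doubleton_eq_iff)
    thus ?thesis using min4pc_sym[OF C i j V] min4pc_sym[OF C j i V] by simp
  qed
  thus "min4pc V E (a, b) (x, y) = (if {a, b} \<in> path_edges V E i j then real d - 1 else real d + 1)"
    using entry_f[OF T i j d e] by simp
  moreover have "min4pc V E (x, y) (a, b) = min4pc V E (a, b) (x, y)"
  proof -
    have "x \<in> V" "y \<in> V" using xy i j by (auto simp: doubleton_eq_iff)
    thus ?thesis using min4pc_sym(2)[OF C _ _ V, of x y] by simp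
  qed
  ultimately show "min4pc V E (x, y) (a, b) = (if {a, b} \<in> path_edges V E i j then real d - 1 else real d + 1)"
    by simp
qed

theorem theorem3p4:
  fixes V :: "'a set" and E :: "'a set set" and n :: nat and i j :: 'a and d :: nat
    and ps :: "('a \<times> 'a) list"
  assumes "is_tree V E"
    and "card V = n"
    and "i \<in> V" and "j \<in> V"
    and "gdist V E i j = d" and "d > 1"
    and "enumerates ps (E \<union> {{i, j}})"
  shows "char_poly (min4pc_sub V E ps) =
    [:2, 1:] ^ (n - 3) *
    [: - 2 * (real d - 1)^2 * (real n - 1),
       - (real n * (real d)^2 - 5 * (real d)^2 + 2 * real n * real d - 2 * real d + 5 * real n - 9),
       - (2 * real n - 6),
       1 :]"
proof -
  note T = assms(1) and i = assms(3) and j = assms(4) and d = assms(5,6)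
  note C = tree_conn[OF T]
  define sf where "sf = (\<lambda>(a::'a, b::'a). {a, b})"
  have dist: "distinct (map sf ps)" and setps: "set (map sf ps) = E \<union> {{i, j}}"
    using assms(7) unfolding enumerates_def sf_def by auto
  have finV: "finite V" using T unfolding is_tree_def simple_graph_def by auto
  have EV: "E \<subseteq> Pow V" using T unfolding is_tree_def simple_graph_def by auto
  have finE: "finite E" using finite_subset[OF EV] finV by auto
  have fij: "{i, j} \<notin> E"
  proof
    assume "{i, j} \<in> E" thus False using edge_gdist1[OF T] d by auto
  qed
  have lenps: "length ps = n"
  proof -
    have "length ps = card (E \<union> {{i, j}})" using distinct_card[OF dist] setps by simp
    also have "\<dots> = card E + 1" using fij finE by simp
    also have "\<dots> = n"
    proof -
      have "card V > 0" using card_gt_0_iff[of V] i finV by auto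
      thus ?thesis using card_edges[OF T i] assms(2) by simp
    qed
    finally show ?thesis .
  qed
  have inB: "sf (ps ! r) \<in> E \<union> {{i, j}}" if "r < n" for r
  proof -
    have "sf (ps ! r) \<in> set (map sf ps)" using that lenps by simp
    thus ?thesis unfolding setps .
  qed
  obtain q where q: "q < n" "sf (ps ! q) = {i, j}"
  proof -
    have "{i, j} \<in> set (map sf ps)" using setps by simp
    then obtain k where "k < length (map sf ps)" "map sf ps ! k = {i, j}" by (auto simp: in_set_conv_nth)
    thus ?thesis using that lenps by simp
  qed
  have notq: "sf (ps ! r) \<in> E" if "r < n" "r \<noteq> q" for r
  proof -
    have "sf (ps ! r) \<noteq> sf (ps ! q)"
      using dist that q lenps by (simp add: nth_eq_iff_index_eq[symmetric])
    thus ?thesis using inB[OF that(1)] q by auto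
  qed
  have compV: "fst (ps ! r) \<in> V \<and> snd (ps ! r) \<in> V" if "r < n" for r
  proof (cases "r = q")
    case True
    thus ?thesis using q i j unfolding sf_def by (cases "ps ! r") (auto simp: doubleton_eq_iff)
  next
    case False
    thus ?thesis using notq[OF that False] tree_edge[OF T] unfolding sf_def by (cases "ps ! r") auto
  qed
  define PE where "PE = path_edges V E i j"
  define P where "P = {r. r < n \<and> r \<noteq> q \<and> sf (ps ! r) \<in> PE}"
  have Psub: "P \<subseteq> {0..<n} - {q}" unfolding P_def by auto
  have cardP: "card P = d"
  proof -
    have "inj_on (\<lambda>r. sf (ps ! r)) P"
      using dist lenps unfolding P_def inj_on_def by (simp add: nth_eq_iff_index_eq[symmetric])
    moreover have "(\<lambda>r. sf (ps ! r)) ` P = PE"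
    proof
      show "(\<lambda>r. sf (ps ! r)) ` P \<subseteq> PE" unfolding P_def by auto
    next
      show "PE \<subseteq> (\<lambda>r. sf (ps ! r)) ` P"
      proof
        fix e assume e: "e \<in> PE"
        hence eE: "e \<in> E" unfolding PE_def path_edges_def by auto
        then obtain r where r: "r < n" "sf (ps ! r) = e"
        proof -
          have "e \<in> set (map sf ps)" using setps eE by simp
          then obtain k where "k < length (map sf ps)" "map sf ps ! k = e" by (auto simp: in_set_conv_nth)
          thus ?thesis using that lenps by simp
        qed
        have "r \<noteq> q" using r q eE fij by auto
        thus "e \<in> (\<lambda>r. sf (ps ! r)) ` P" using r e unfolding P_def by auto
      qed
    qed
    ultimately have "card P = card PE" using card_image by metis
    thus ?thesis using card_path_edges[OF T i j] d unfolding PE_def by simp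
  qed
  define w where "w = (\<lambda>r. if r \<in> P then real d - 1 else real d + 1)"
  have A: "min4pc_sub V E ps \<in> carrier_mat n n" unfolding min4pc_sub_def lenps by simp
  have n3: "n \<ge> 3" using card_rest(2)[OF q(1) Psub] cardP d by simp
  have ent: "min4pc_sub V E ps $$ (r, c) =
       (if r = c then 0 else if r = q then w c else if c = q then w r else 2)" if rc: "r < n" "c < n" for r c
  proof -
    have e0: "min4pc_sub V E ps $$ (r, c) = min4pc V E (ps ! r) (ps ! c)"
      unfolding min4pc_sub_def using rc lenps by simp
    obtain a b where ab: "ps ! r = (a, b)" by fastforce
    obtain a' b' where ab': "ps ! c = (a', b')" by fastforce
    show ?thesis
    proof (cases "r = c")
      case True thus ?thesis using e0 compV[OF rc(1)] ab min4pc_diag[of a V b E] by simp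
    next
      case rc_ne: False
      show ?thesis
      proof (cases "r = q")
        case True
        have eE: "{a', b'} \<in> E" using notq[OF rc(2)] rc_ne True ab' unfolding sf_def by simp
        have xy: "{a, b} = {i, j}" using q True ab unfolding sf_def by simp
        show ?thesis using entry_f2(2)[OF T i j d eE xy] e0 ab ab' True rc_ne rc
          unfolding w_def P_def PE_def sf_def by auto
      next
        case rq: False
        have eE: "{a, b} \<in> E" using notq[OF rc(1) rq] ab unfolding sf_def by simp
        show ?thesis
        proof (cases "c = q")
          case True
          have xy: "{a', b'} = {i, j}" using q True ab' unfolding sf_def by simp
          show ?thesis using entry_f2(1)[OF T i j d eE xy] e0 ab ab' True rc_ne rc rq
            unfolding w_def P_def PE_def sf_def by auto
        next
          case cq: False
          have eE': "{a', b'} \<in> E" using notq[OF rc(2) cq] ab' unfolding sf_def by simp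
          have "sf (ps ! r) \<noteq> sf (ps ! c)"
            using dist rc lenps rc_ne by (simp add: nth_eq_iff_index_eq[symmetric])
          hence ne: "{a, b} \<noteq> {a', b'}" using ab ab' unfolding sf_def by simp
          show ?thesis using entry_edges[OF T eE eE' ne] e0 ab ab' rc_ne rq cq by simp
        qed
      qed
    qed
  qed
  show ?thesis
    by (rule char_poly_struct[OF A q(1) Psub cardP n3 ent]) (auto simp: w_def)
qed

end
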